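(* Let $P$ be a function-free program and $G$ a goal. If $EVR_L$ prunes every infinite SLD derivation of $G$ in $P$, independently of the selection rule used, then $EVR_L$ prunes every infinite RSLD derivation of $G$ in $P$.
   Context: Goals are finite lists of atoms; a clause is $h\leftarrow B$; a program is a finite set of clauses; function-free means no function symbols of positive arity occur. $N\subseteq_L G$ means $N$ is a subsequence of $G$, $G-N$ is the list of deleted atoms, $=_L$ is equality as lists. If $G=a_1,\dots,a_k$, $c=(h\leftarrow B)$, $\xi$ a renaming and $\theta$ an idempotent relevant mgu of $h\xi$ and some $a_i$, then $(a_1,\dots,a_{i-1},B\xi,a_{i+1},\dots,a_k)\theta$ is a resolvent. An SLD derivation of $G_0$ in $P$ is a finite or infinite sequence $G_0\xrightarrow{c_0\xi_0,\theta_0}G_1\xrightarrow{c_1\xi_1,\theta_1}\cdots$ of such steps with $c_j\in P$ and $var(c_j\xi_j)\cap(var(G_0)\cup var(c_0\xi_0)\cup\dots\cup var(c_{j-1}\xi_{j-1}))=\emptyset$. Reduced goal: $G>>^{\tau}N$ up to variable set $X$ if (i) $N\subseteq_L G$, (ii) for each atom $b$ of $G-N$, $b\tau$ occurs in $N$, (iii) $x\tau=x$ for all $x\in var(N)\cup X$. RSLD derivation: $G_0>>^{\alpha_0}N_0\xrightarrow{c_0\xi_0,\theta_0}G_1>>^{\alpha_1}N_1\xrightarrow{c_1\xi_1,\theta_1}G_2\cdots$ where each $N_j\xrightarrow{c_j\xi_j,\theta_j}G_{j+1}$ is an SLD step with $c_j\in P$ and the standardisation-apart condition above, and $G_j>>^{\alpha_j}N_j$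 up to $var(G_0\theta_0\cdots\theta_{j-1})$. (An SLD derivation is the special case $N_j=G_j$.) $EVR_L$ check: an RSLD derivation is pruned by $EVR_L$ if there exist $0\le i<j$ and a renaming $\tau$ with $G_0\theta_0\cdots\theta_{j-1}=G_0\theta_0\cdots\theta_{i-1}\tau$ and $N_j=_L N_i\tau$. *)

theory Defs
  imports "HOL-Library.Sublist" "HOL-Library.Multiset"
begin

datatype ('f, 'v) trm = Var 'v | Fn 'f "('f, 'v) trm list"

datatype ('p, 'f, 'v) atm = Atm 'p "('f, 'v) trm list"

type_synonym ('p, 'f, 'v) goal = "('p, 'f, 'v) atm list"

type_synonym ('p, 'f, 'v) clause = "('p, 'f, 'v) atm \<times> ('p, 'f, 'v) atm list"

type_synonym ('f, 'v) subst = "'v \<Rightarrow> ('f, 'v) trm"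

fun vars_trm :: "('f, 'v) trm \<Rightarrow> 'v set" where
  "vars_trm (Var x) = {x}"
| "vars_trm (Fn f ts) = \<Union> (set (map vars_trm ts))"

fun vars_atm :: "('p, 'f, 'v) atm \<Rightarrow> 'v set" where
  "vars_atm (Atm p ts) = \<Union> (set (map vars_trm ts))"

definition vars_goal :: "('p, 'f, 'v) goal \<Rightarrow> 'v set" where
  "vars_goal G = \<Union> (set (map vars_atm G))"

definition vars_clause :: "('p, 'f, 'v) clause \<Rightarrow> 'v set" where
  "vars_clause c = vars_atm (fst c) \<union> vars_goal (snd c)"

fun ff_trm :: "('f, 'v) trm \<Rightarrow> bool" where
  "ff_trm (Var x) = True"
| "ff_trm (Fn f ts) = (ts = [])"

fun ff_atm :: "('p, 'f, 'v) atm \<Rightarrow> bool" where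
  "ff_atm (Atm p ts) = (\<forall>t \<in> set ts. ff_trm t)"

definition ff_goal :: "('p, 'f, 'v) goal \<Rightarrow> bool" where
  "ff_goal G = (\<forall>a \<in> set G. ff_atm a)"

definition ff_program :: "('p, 'f, 'v) clause set \<Rightarrow> bool" where
  "ff_program P = (\<forall>c \<in> P. ff_atm (fst c) \<and> ff_goal (snd c))"

fun subst_trm :: "('f, 'v) subst \<Rightarrow> ('f, 'v) trm \<Rightarrow> ('f, 'v) trm" where
  "subst_trm \<sigma> (Var x) = \<sigma> x"
| "subst_trm \<sigma> (Fn f ts) = Fn f (map (subst_trm \<sigma>) ts)"

fun subst_atm :: "('f, 'v) subst \<Rightarrow> ('p, 'f, 'v) atm \<Rightarrow> ('p, 'f, 'v) atm" where
  "subst_atm \<sigma> (Atm p ts) = Atm p (map (subst_trm \<sigma>) ts)"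

definition subst_goal :: "('f, 'v) subst \<Rightarrow> ('p, 'f, 'v) goal \<Rightarrow> ('p, 'f, 'v) goal" where
  "subst_goal \<sigma> G = map (subst_atm \<sigma>) G"

definition subst_clause :: "('f, 'v) subst \<Rightarrow> ('p, 'f, 'v) clause \<Rightarrow> ('p, 'f, 'v) clause" where
  "subst_clause \<sigma> c = (subst_atm \<sigma> (fst c), subst_goal \<sigma> (snd c))"

text \<open>Composition: first \<sigma>, then \<tau> (written \<sigma>\<tau> in the paper).\<close>
definition subst_comp :: "('f, 'v) subst \<Rightarrow> ('f, 'v) subst \<Rightarrow> ('f, 'v) subst" where
  "subst_comp \<sigma> \<tau> = (\<lambda>x. subst_trm \<tau> (\<sigma> x))"

definition subst_dom :: "('f, 'v) subst \<Rightarrow> 'v set" where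
  "subst_dom \<sigma> = {x. \<sigma> x \<noteq> Var x}"

definition subst_range_vars :: "('f, 'v) subst \<Rightarrow> 'v set" where
  "subst_range_vars \<sigma> = (\<Union>x \<in> subst_dom \<sigma>. vars_trm (\<sigma> x))"

definition is_renaming :: "('f, 'v) subst \<Rightarrow> bool" where
  "is_renaming \<sigma> = (\<exists>f. bij f \<and> \<sigma> = (\<lambda>x. Var (f x)))"

definition idempotent :: "('f, 'v) subst \<Rightarrow> bool" where
  "idempotent \<theta> = (subst_comp \<theta> \<theta> = \<theta>)"

definition is_unifier :: "('f, 'v) subst \<Rightarrow> ('p, 'f, 'v) atm \<Rightarrow> ('p, 'f, 'v) atm \<Rightarrow> bool" where
  "is_unifier \<theta> a b = (subst_atm \<theta> a = subst_atm \<theta> b)"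

definition is_mgu :: "('f, 'v) subst \<Rightarrow> ('p, 'f, 'v) atm \<Rightarrow> ('p, 'f, 'v) atm \<Rightarrow> bool" where
  "is_mgu \<theta> a b = (is_unifier \<theta> a b \<and>
     (\<forall>\<sigma>. is_unifier \<sigma> a b \<longrightarrow> (\<exists>\<eta>. \<sigma> = subst_comp \<theta> \<eta>)))"

definition relevant :: "('f, 'v) subst \<Rightarrow> ('p, 'f, 'v) atm \<Rightarrow> ('p, 'f, 'v) atm \<Rightarrow> bool" where
  "relevant \<theta> a b = (subst_dom \<theta> \<union> subst_range_vars \<theta> \<subseteq> vars_atm a \<union> vars_atm b)"

text \<open>Iterated composition: comp_upto \<theta>s j = \<theta>_0 \<theta>_1 ... \<theta>_(j-1).\<close>
fun comp_upto :: "(nat \<Rightarrow> ('f, 'v) subst) \<Rightarrow> nat \<Rightarrow> ('f, 'v) subst" where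
  "comp_upto \<theta>s 0 = Var"
| "comp_upto \<theta>s (Suc j) = subst_comp (comp_upto \<theta>s j) (\<theta>s j)"

definition sld_step ::
  "('p, 'f, 'v) clause set \<Rightarrow> ('p, 'f, 'v) goal \<Rightarrow> ('p, 'f, 'v) clause \<Rightarrow>
   ('f, 'v) subst \<Rightarrow> ('f, 'v) subst \<Rightarrow> ('p, 'f, 'v) goal \<Rightarrow> bool" where
  "sld_step P N c \<xi> \<theta> G' =
     (c \<in> P \<and> is_renaming \<xi> \<and>
      (\<exists>i < length N. idempotent \<theta> \<and> relevant \<theta> (subst_atm \<xi> (fst c)) (N ! i) \<and>
          is_mgu \<theta> (subst_atm \<xi> (fst c)) (N ! i) \<and>
          G' = subst_goal \<theta> (take i N @ subst_goal \<xi> (snd c) @ drop (Suc i) N)))"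

definition standardised_apart ::
  "('p, 'f, 'v) goal \<Rightarrow> (nat \<Rightarrow> ('p, 'f, 'v) clause) \<Rightarrow> (nat \<Rightarrow> ('f, 'v) subst) \<Rightarrow> nat \<Rightarrow> bool" where
  "standardised_apart G0 cs \<xi>s j =
     (vars_clause (subst_clause (\<xi>s j) (cs j)) \<inter>
       (vars_goal G0 \<union> (\<Union>k<j. vars_clause (subst_clause (\<xi>s k) (cs k)))) = {})"

definition inf_sld_deriv ::
  "('p, 'f, 'v) clause set \<Rightarrow> ('p, 'f, 'v) goal \<Rightarrow> (nat \<Rightarrow> ('p, 'f, 'v) goal) \<Rightarrow>
   (nat \<Rightarrow> ('p, 'f, 'v) clause) \<Rightarrow> (nat \<Rightarrow> ('f, 'v) subst) \<Rightarrow> (nat \<Rightarrow> ('f, 'v) subst) \<Rightarrow> bool" where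
  "inf_sld_deriv P G0 Gs cs \<xi>s \<theta>s =
     (Gs 0 = G0 \<and>
      (\<forall>j. sld_step P (Gs j) (cs j) (\<xi>s j) (\<theta>s j) (Gs (Suc j)) \<and> standardised_apart G0 cs \<xi>s j))"

text \<open>G >>^\<tau> N up to X. The list G - N of deleted atoms is the multiset difference
  (well-defined since N is a subsequence of G).\<close>
definition reduced ::
  "('p, 'f, 'v) goal \<Rightarrow> ('f, 'v) subst \<Rightarrow> ('p, 'f, 'v) goal \<Rightarrow> 'v set \<Rightarrow> bool" where
  "reduced G \<tau> N X =
     (subseq N G \<and>
      (\<forall>b \<in># mset G - mset N. subst_atm \<tau> b \<in> set N) \<and>
      (\<forall>x \<in> vars_goal N \<union> X. \<tau> x = Var x))"

definition inf_rsld_deriv ::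
  "('p, 'f, 'v) clause set \<Rightarrow> ('p, 'f, 'v) goal \<Rightarrow> (nat \<Rightarrow> ('p, 'f, 'v) goal) \<Rightarrow>
   (nat \<Rightarrow> ('p, 'f, 'v) goal) \<Rightarrow> (nat \<Rightarrow> ('f, 'v) subst) \<Rightarrow>
   (nat \<Rightarrow> ('p, 'f, 'v) clause) \<Rightarrow> (nat \<Rightarrow> ('f, 'v) subst) \<Rightarrow> (nat \<Rightarrow> ('f, 'v) subst) \<Rightarrow> bool" where
  "inf_rsld_deriv P G0 Gs Ns \<alpha>s cs \<xi>s \<theta>s =
     (Gs 0 = G0 \<and>
      (\<forall>j. reduced (Gs j) (\<alpha>s j) (Ns j) (vars_goal (subst_goal (comp_upto \<theta>s j) G0)) \<and>
           sld_step P (Ns j) (cs j) (\<xi>s j) (\<theta>s j) (Gs (Suc j)) \<and>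
           standardised_apart G0 cs \<xi>s j))"

definition evr_pruned ::
  "('p, 'f, 'v) goal \<Rightarrow> (nat \<Rightarrow> ('f, 'v) subst) \<Rightarrow> (nat \<Rightarrow> ('p, 'f, 'v) goal) \<Rightarrow> bool" where
  "evr_pruned G0 \<theta>s Ns =
     (\<exists>i j \<tau>. i < j \<and> is_renaming \<tau> \<and>
        subst_goal (comp_upto \<theta>s j) G0 = subst_goal \<tau> (subst_goal (comp_upto \<theta>s i) G0) \<and>
        Ns j = subst_goal \<tau> (Ns i))"

end

theory Submission
  imports Defs
begin

definition ren :: "('v \<Rightarrow> 'v) \<Rightarrow> ('f, 'v) subst" where
  "ren f = (\<lambda>x. Var (f x))"

lemma subst_trm_comp: "subst_trm \<tau> (subst_trm \<sigma> t) = subst_trm (subst_comp \<sigma> \<tau>) t"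
  by (induction t) (auto simp: subst_comp_def)

lemma subst_atm_comp: "subst_atm \<tau> (subst_atm \<sigma> a) = subst_atm (subst_comp \<sigma> \<tau>) a"
  by (cases a) (auto simp: subst_trm_comp)

lemma subst_goal_comp: "subst_goal \<tau> (subst_goal \<sigma> G) = subst_goal (subst_comp \<sigma> \<tau>) G"
  by (auto simp: subst_goal_def subst_atm_comp)

lemma subst_trm_Var[simp]: "subst_trm Var t = t"
  by (induction t) (auto simp: map_idI)

lemma subst_atm_Var[simp]: "subst_atm Var a = a"
  by (cases a) (auto intro: map_idI)

lemma subst_goal_Var[simp]: "subst_goal Var G = G"
  by (auto simp: subst_goal_def intro: map_idI)

lemma subst_trm_cong: "(\<And>x. x \<in> vars_trm t \<Longrightarrow> \<sigma> x = \<tau> x) \<Longrightarrow> subst_trm \<sigma> t = subst_trm \<tau> t"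
  by (induction t) auto

lemma subst_atm_cong: "(\<And>x. x \<in> vars_atm a \<Longrightarrow> \<sigma> x = \<tau> x) \<Longrightarrow> subst_atm \<sigma> a = subst_atm \<tau> a"
  by (cases a) (auto intro: subst_trm_cong)

lemma subst_goal_cong: "(\<And>x. x \<in> vars_goal G \<Longrightarrow> \<sigma> x = \<tau> x) \<Longrightarrow> subst_goal \<sigma> G = subst_goal \<tau> G"
  by (auto simp: subst_goal_def vars_goal_def intro: subst_atm_cong)

lemma vars_trm_ren: "vars_trm (subst_trm (ren f) t) = f ` vars_trm t"
  by (induction t) (auto simp: ren_def)

lemma vars_atm_ren: "vars_atm (subst_atm (ren f) a) = f ` vars_atm a"
  by (cases a) (auto simp: vars_trm_ren)

lemma vars_goal_ren: "vars_goal (subst_goal (ren f) G) = f ` vars_goal G"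
  by (auto simp: vars_goal_def subst_goal_def vars_atm_ren)

lemma ren_comp: "subst_comp (ren f) (ren g) = ren (g \<circ> f)"
  by (auto simp: subst_comp_def ren_def)

lemma ren_id: "ren id = Var" by (auto simp: ren_def)

lemma ren_inv: "bij f \<Longrightarrow> subst_comp (ren f) (ren (inv f)) = Var"
  by (auto simp: subst_comp_def ren_def bij_is_inj fun_eq_iff)

lemma ren_inv2: "bij f \<Longrightarrow> subst_comp (ren (inv f)) (ren f) = Var"
  by (auto simp: subst_comp_def ren_def bij_is_surj surj_f_inv_f fun_eq_iff)

lemma goal_ren_inv: "bij f \<Longrightarrow> subst_goal (ren (inv f)) (subst_goal (ren f) G) = G"
  by (simp add: subst_goal_comp ren_inv)

lemma goal_ren_inv2: "bij f \<Longrightarrow> subst_goal (ren f) (subst_goal (ren (inv f)) G) = G"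
  by (simp add: subst_goal_comp ren_inv2)

lemma is_renaming_ren: "is_renaming \<sigma> \<longleftrightarrow> (\<exists>f. bij f \<and> \<sigma> = ren f)"
  by (simp add: is_renaming_def ren_def)

lemma vars_subst_trm: "vars_trm (subst_trm \<theta> t) \<subseteq> vars_trm t \<union> subst_range_vars \<theta>"
proof (induction t)
  case (Var x) then show ?case
    by (cases "x \<in> subst_dom \<theta>") (auto simp: subst_range_vars_def subst_dom_def)
qed fastforce

lemma vars_subst_atm: "vars_atm (subst_atm \<theta> a) \<subseteq> vars_atm a \<union> subst_range_vars \<theta>"
  by (cases a) (use vars_subst_trm in fastforce)

lemma vars_subst_goal: "vars_goal (subst_goal \<theta> G) \<subseteq> vars_goal G \<union> subst_range_vars \<theta>"
  using vars_subst_atm by (fastforce simp: vars_goal_def subst_goal_def)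

lemma vars_goal_append[simp]: "vars_goal (xs @ ys) = vars_goal xs \<union> vars_goal ys"
  by (simp add: vars_goal_def)

lemma vars_goal_Cons[simp]: "vars_goal (x # ys) = vars_atm x \<union> vars_goal ys"
  by (simp add: vars_goal_def)

lemma vars_goal_Nil[simp]: "vars_goal [] = {}"
  by (simp add: vars_goal_def)

lemma vars_goal_take: "vars_goal (take i G) \<subseteq> vars_goal G"
  by (auto simp: vars_goal_def dest: in_set_takeD)

lemma vars_goal_drop: "vars_goal (drop i G) \<subseteq> vars_goal G"
  by (auto simp: vars_goal_def dest: in_set_dropD)

lemma vars_goal_nth: "i < length G \<Longrightarrow> vars_atm (G ! i) \<subseteq> vars_goal G"
  by (auto simp: vars_goal_def) (metis nth_mem)

lemma finite_vars_trm: "finite (vars_trm t)"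
  by (induction t) auto

lemma finite_vars_atm: "finite (vars_atm a)"
  by (cases a) (auto simp: finite_vars_trm)

lemma finite_vars_goal: "finite (vars_goal G)"
  by (auto simp: vars_goal_def finite_vars_atm)

lemma finite_vars_clause: "finite (vars_clause c)"
  by (auto simp: vars_clause_def finite_vars_atm finite_vars_goal)

definition conjs :: "('v \<Rightarrow> 'v) \<Rightarrow> ('f, 'v) subst \<Rightarrow> ('f, 'v) subst" where
  "conjs f \<theta> = (\<lambda>x. subst_trm (ren f) (\<theta> (inv f x)))"

lemma conj_key: "bij f \<Longrightarrow> subst_comp (ren f) (conjs f \<theta>) = subst_comp \<theta> (ren f)"
  by (auto simp: subst_comp_def conjs_def ren_def fun_eq_iff bij_is_inj)

lemma conj_trm: "bij f \<Longrightarrow> subst_trm (conjs f \<theta>) (subst_trm (ren f) t) = subst_trm (ren f) (subst_trm \<theta> t)"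
  by (simp add: subst_trm_comp conj_key)

lemma conj_atm: "bij f \<Longrightarrow> subst_atm (conjs f \<theta>) (subst_atm (ren f) t) = subst_atm (ren f) (subst_atm \<theta> t)"
  by (simp add: subst_atm_comp conj_key)

lemma conj_goal: "bij f \<Longrightarrow> subst_goal (conjs f \<theta>) (subst_goal (ren f) t) = subst_goal (ren f) (subst_goal \<theta> t)"
  by (simp add: subst_goal_comp conj_key)

lemma ren_trm_inj: "bij f \<Longrightarrow> subst_trm (ren f) s = subst_trm (ren f) t \<longleftrightarrow> s = t"
  by (metis subst_trm_comp ren_inv subst_trm_Var)

lemma ren_atm_inj: "bij f \<Longrightarrow> subst_atm (ren f) s = subst_atm (ren f) t \<longleftrightarrow> s = t"
  by (metis subst_atm_comp ren_inv subst_atm_Var)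

lemma ren_goal_inj: "bij f \<Longrightarrow> subst_goal (ren f) s = subst_goal (ren f) t \<longleftrightarrow> s = t"
  by (metis subst_goal_comp ren_inv subst_goal_Var)

lemma conj_dom: assumes "bij f" shows "subst_dom (conjs f \<theta>) = f ` subst_dom \<theta>"
proof -
  have "x \<in> subst_dom (conjs f \<theta>) \<longleftrightarrow> inv f x \<in> subst_dom \<theta>" for x
  proof -
    have e: "subst_trm (ren f) (Var (inv f x)) = Var x"
      using assms by (simp add: ren_def bij_is_surj surj_f_inv_f)
    have "x \<in> subst_dom (conjs f \<theta>) \<longleftrightarrow> subst_trm (ren f) (\<theta> (inv f x)) \<noteq> Var x"
      by (simp add: subst_dom_def conjs_def)
    also have "\<dots> \<longleftrightarrow> subst_trm (ren f) (\<theta> (inv f x)) \<noteq> subst_trm (ren f) (Var (inv f x))"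
      by (simp only: e)
    also have "\<dots> \<longleftrightarrow> \<theta> (inv f x) \<noteq> Var (inv f x)"
      by (simp only: ren_trm_inj[OF assms])
    finally show ?thesis by (simp add: subst_dom_def)
  qed
  then show ?thesis using assms
    by (auto simp: image_iff bij_is_inj) (metis bij_inv_eq_iff)
qed

lemma conj_range: assumes "bij f" shows "subst_range_vars (conjs f \<theta>) = f ` subst_range_vars \<theta>"
proof -
  have "subst_range_vars (conjs f \<theta>) = (\<Union>x\<in>f ` subst_dom \<theta>. f ` vars_trm (\<theta> (inv f x)))"
    unfolding subst_range_vars_def conj_dom[OF assms] by (simp add: conjs_def vars_trm_ren)
  also have "\<dots> = (\<Union>y\<in>subst_dom \<theta>. f ` vars_trm (\<theta> y))"
    using assms by (simp add: bij_is_inj)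
  also have "\<dots> = f ` subst_range_vars \<theta>"
    by (auto simp: subst_range_vars_def)
  finally show ?thesis .
qed

lemma conj_idem: "bij f \<Longrightarrow> idempotent \<theta> \<Longrightarrow> idempotent (conjs f \<theta>)"
proof -
  assume f: "bij f" and i: "idempotent \<theta>"
  have "subst_comp (conjs f \<theta>) (conjs f \<theta>) x = conjs f \<theta> x" for x
  proof -
    have cx: "conjs f \<theta> x = subst_trm (ren f) (\<theta> (inv f x))" by (simp add: conjs_def)
    have "subst_comp (conjs f \<theta>) (conjs f \<theta>) x = subst_trm (ren f) (subst_trm \<theta> (\<theta> (inv f x)))"
      unfolding subst_comp_def cx using f by (simp only: conj_trm)
    also have "subst_trm \<theta> (\<theta> (inv f x)) = \<theta> (inv f x)"
      using i unfolding idempotent_def by (metis subst_comp_def)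
    finally show ?thesis by (simp add: cx)
  qed
  then show ?thesis by (auto simp: idempotent_def)
qed

lemma conj_mgu: assumes "bij f" "is_mgu \<theta> a b"
  shows "is_mgu (conjs f \<theta>) (subst_atm (ren f) a) (subst_atm (ren f) b)"
  unfolding is_mgu_def
proof (intro conjI allI impI)
  show "is_unifier (conjs f \<theta>) (subst_atm (ren f) a) (subst_atm (ren f) b)"
    using assms by (simp add: is_unifier_def is_mgu_def conj_atm)
next
  fix \<sigma> assume "is_unifier \<sigma> (subst_atm (ren f) a) (subst_atm (ren f) b)"
  then have "is_unifier (subst_comp (ren f) \<sigma>) a b"
    by (simp add: is_unifier_def subst_atm_comp)
  then obtain \<eta> where eta: "subst_comp (ren f) \<sigma> = subst_comp \<theta> \<eta>"
    using assms by (auto simp: is_mgu_def)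
  have "subst_comp (conjs f \<theta>) (subst_comp (ren (inv f)) \<eta>) = \<sigma>"
  proof
    fix x
    have "subst_comp (conjs f \<theta>) (subst_comp (ren (inv f)) \<eta>) x
        = subst_trm (subst_comp (ren f) (subst_comp (ren (inv f)) \<eta>)) (\<theta> (inv f x))"
      by (simp add: subst_comp_def conjs_def subst_trm_comp)
    also have "subst_comp (ren f) (subst_comp (ren (inv f)) \<eta>) = \<eta>"
      using assms by (auto simp: fun_eq_iff subst_comp_def ren_def bij_is_inj)
    also have "subst_trm \<eta> (\<theta> (inv f x)) = subst_comp (ren f) \<sigma> (inv f x)"
      by (metis eta subst_comp_def)
    also have "\<dots> = \<sigma> x"
      using assms by (simp add: subst_comp_def ren_def bij_is_surj surj_f_inv_f)
    finally show "subst_comp (conjs f \<theta>) (subst_comp (ren (inv f)) \<eta>) x = \<sigma> x" .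
  qed
  then show "\<exists>\<eta>. \<sigma> = subst_comp (conjs f \<theta>) \<eta>" by metis
qed

lemma conj_relevant: assumes "bij f" "relevant \<theta> a b"
  shows "relevant (conjs f \<theta>) (subst_atm (ren f) a) (subst_atm (ren f) b)"
  using assms by (auto simp: relevant_def conj_dom conj_range vars_atm_ren)

definition astep_w :: "('p, 'f, 'v) clause set \<Rightarrow> ('p, 'f, 'v) goal \<Rightarrow> ('p, 'f, 'v) goal \<Rightarrow>
   ('p, 'f, 'v) clause \<Rightarrow> ('f, 'v) subst \<Rightarrow> ('f, 'v) subst \<Rightarrow> nat \<Rightarrow> ('p, 'f, 'v) goal \<Rightarrow> ('p, 'f, 'v) goal \<Rightarrow> bool" where
  "astep_w P A H c \<xi> \<theta> i A' H' = (c \<in> P \<and> is_renaming \<xi> \<and>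
     vars_clause (subst_clause \<xi> c) \<inter> (vars_goal A \<union> vars_goal H) = {} \<and> i < length H \<and>
     idempotent \<theta> \<and> relevant \<theta> (subst_atm \<xi> (fst c)) (H ! i) \<and>
     is_mgu \<theta> (subst_atm \<xi> (fst c)) (H ! i) \<and>
     H' = subst_goal \<theta> (take i H @ subst_goal \<xi> (snd c) @ drop (Suc i) H) \<and>
     A' = subst_goal \<theta> A)"

lemma vars_clause_ren: "vars_clause (subst_clause (subst_comp \<xi> (ren f)) c) = f ` vars_clause (subst_clause \<xi> c)"
  by (simp add: vars_clause_def subst_clause_def subst_atm_comp[symmetric] subst_goal_comp[symmetric]
      vars_atm_ren vars_goal_ren image_Un)

lemma subst_goal_append: "subst_goal \<sigma> (xs @ ys) = subst_goal \<sigma> xs @ subst_goal \<sigma> ys"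
  by (simp add: subst_goal_def)

lemma subst_goal_take: "subst_goal \<sigma> (take i xs) = take i (subst_goal \<sigma> xs)"
  by (simp add: subst_goal_def take_map)

lemma subst_goal_drop: "subst_goal \<sigma> (drop i xs) = drop i (subst_goal \<sigma> xs)"
  by (simp add: subst_goal_def drop_map)

lemma subst_goal_nth: "i < length xs \<Longrightarrow> subst_goal \<sigma> xs ! i = subst_atm \<sigma> (xs ! i)"
  by (simp add: subst_goal_def)

lemma length_subst_goal[simp]: "length (subst_goal \<sigma> xs) = length xs"
  by (simp add: subst_goal_def)

lemma astep_equiv:
  assumes f: "bij f" and st: "astep_w P A H c \<xi> \<theta> i A' H'"
  shows "astep_w P (subst_goal (ren f) A) (subst_goal (ren f) H) c (subst_comp \<xi> (ren f)) (conjs f \<theta>) i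
           (subst_goal (ren f) A') (subst_goal (ren f) H')"
proof -
  from st obtain g where g: "bij g" "\<xi> = ren g" by (auto simp: astep_w_def is_renaming_ren)
  have ren': "is_renaming (subst_comp \<xi> (ren f))"
    using g f by (auto simp: is_renaming_ren ren_comp intro: bij_comp)
  have hd: "subst_atm (subst_comp \<xi> (ren f)) (fst c) = subst_atm (ren f) (subst_atm \<xi> (fst c))"
    by (simp add: subst_atm_comp)
  have nth: "subst_goal (ren f) H ! i = subst_atm (ren f) (H ! i)"
    using st by (simp add: astep_w_def subst_goal_nth)
  from st have c: "c \<in> P" and i: "i < length H" and idem: "idempotent \<theta>"
    and rel: "relevant \<theta> (subst_atm \<xi> (fst c)) (H ! i)"
    and mgu: "is_mgu \<theta> (subst_atm \<xi> (fst c)) (H ! i)"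
    and A': "A' = subst_goal \<theta> A"
    and H0: "H' = subst_goal \<theta> (take i H @ subst_goal \<xi> (snd c) @ drop (Suc i) H)"
    and dj: "vars_clause (subst_clause \<xi> c) \<inter> (vars_goal A \<union> vars_goal H) = {}"
    by (auto simp: astep_w_def)
  have disj: "vars_clause (subst_clause (subst_comp \<xi> (ren f)) c) \<inter>
      (vars_goal (subst_goal (ren f) A) \<union> vars_goal (subst_goal (ren f) H)) = {}"
  proof -
    have "f ` vars_clause (subst_clause \<xi> c) \<inter> (f ` vars_goal A \<union> f ` vars_goal H)
       = f ` (vars_clause (subst_clause \<xi> c) \<inter> (vars_goal A \<union> vars_goal H))"
      using f by (simp add: image_Un image_Int bij_is_inj)
    then show ?thesis using dj by (simp add: vars_clause_ren vars_goal_ren)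
  qed
  have H': "subst_goal (ren f) H' = subst_goal (conjs f \<theta>)
      (take i (subst_goal (ren f) H) @ subst_goal (subst_comp \<xi> (ren f)) (snd c) @ drop (Suc i) (subst_goal (ren f) H))"
  proof -
    have "take i (subst_goal (ren f) H) @ subst_goal (subst_comp \<xi> (ren f)) (snd c) @ drop (Suc i) (subst_goal (ren f) H)
       = subst_goal (ren f) (take i H @ subst_goal \<xi> (snd c) @ drop (Suc i) H)"
      by (simp add: subst_goal_append subst_goal_take subst_goal_drop subst_goal_comp)
    then show ?thesis by (simp add: H0 conj_goal[OF f])
  qed
  show ?thesis unfolding astep_w_def hd nth
    using c ren' disj i conj_idem[OF f idem] conj_relevant[OF f rel] conj_mgu[OF f mgu] H'
    by (simp add: A' conj_goal[OF f])
qed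

fun good_trm :: "'f set \<Rightarrow> ('f, 'v) trm \<Rightarrow> bool" where
  "good_trm Cs (Var x) = True"
| "good_trm Cs (Fn f ts) = (ts = [] \<and> f \<in> Cs)"

fun good_atm :: "('p \<times> nat) set \<Rightarrow> 'f set \<Rightarrow> ('p, 'f, 'v) atm \<Rightarrow> bool" where
  "good_atm Sig Cs (Atm p ts) = ((p, length ts) \<in> Sig \<and> (\<forall>t \<in> set ts. good_trm Cs t))"

definition good_goal :: "('p \<times> nat) set \<Rightarrow> 'f set \<Rightarrow> ('p, 'f, 'v) goal \<Rightarrow> bool" where
  "good_goal Sig Cs G = (\<forall>a \<in> set G. good_atm Sig Cs a)"

definition good_subst :: "'f set \<Rightarrow> ('f, 'v) subst \<Rightarrow> bool" where
  "good_subst Cs \<theta> = (\<forall>x. good_trm Cs (\<theta> x))"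

lemma good_subst_trm: "good_trm Cs t \<Longrightarrow> good_subst Cs \<theta> \<Longrightarrow> good_trm Cs (subst_trm \<theta> t)"
  by (cases t) (auto simp: good_subst_def)

lemma good_subst_atm: "good_atm Sig Cs a \<Longrightarrow> good_subst Cs \<theta> \<Longrightarrow> good_atm Sig Cs (subst_atm \<theta> a)"
  by (cases a) (auto simp: good_subst_trm)

lemma good_subst_goal: "good_goal Sig Cs G \<Longrightarrow> good_subst Cs \<theta> \<Longrightarrow> good_goal Sig Cs (subst_goal \<theta> G)"
  by (auto simp: good_goal_def subst_goal_def good_subst_atm)

lemma good_ren: "good_subst Cs (ren f)"
  by (simp add: good_subst_def ren_def)

lemma good_goal_append[simp]: "good_goal Sig Cs (xs @ ys) = (good_goal Sig Cs xs \<and> good_goal Sig Cs ys)"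
  by (auto simp: good_goal_def)

lemma good_goal_take: "good_goal Sig Cs G \<Longrightarrow> good_goal Sig Cs (take i G)"
  by (auto simp: good_goal_def dest: in_set_takeD)

lemma good_goal_drop: "good_goal Sig Cs G \<Longrightarrow> good_goal Sig Cs (drop i G)"
  by (auto simp: good_goal_def dest: in_set_dropD)

lemma good_goal_nth: "good_goal Sig Cs G \<Longrightarrow> i < length G \<Longrightarrow> good_atm Sig Cs (G ! i)"
  by (auto simp: good_goal_def)

definition gflat :: "'f set \<Rightarrow> ('f, 'v) trm \<Rightarrow> ('f, 'v) trm" where
  "gflat Cs t = (if good_trm Cs t then t else Var undefined)"

lemma mgu_good:
  assumes a: "good_atm Sig Cs a" and b: "good_atm Sig Cs b" and m: "is_mgu \<theta> a b"
  shows "good_subst Cs \<theta>"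
proof -
  define \<sigma> where "\<sigma> = (\<lambda>y. gflat Cs (\<theta> y))"
  have key: "good_trm Cs t \<Longrightarrow> subst_trm \<sigma> t = gflat Cs (subst_trm \<theta> t)" for t
    by (cases t) (auto simp: \<sigma>_def gflat_def)
  have keya: "good_atm Sig Cs a \<Longrightarrow> subst_atm \<sigma> a = (case subst_atm \<theta> a of Atm p ts \<Rightarrow> Atm p (map (gflat Cs) ts))" for a
    by (cases a) (auto simp: key)
  have "is_unifier \<sigma> a b"
    using m a b keya[OF a] keya[OF b] by (simp add: is_mgu_def is_unifier_def)
  then obtain \<eta> where eta: "\<sigma> = subst_comp \<theta> \<eta>" using m by (auto simp: is_mgu_def)
  show ?thesis unfolding good_subst_def
  proof
    fix x
    have e: "gflat Cs (\<theta> x) = subst_trm \<eta> (\<theta> x)"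
      using eta by (metis \<sigma>_def subst_comp_def)
    show "good_trm Cs (\<theta> x)"
    proof (rule ccontr)
      assume "\<not> good_trm Cs (\<theta> x)"
      then obtain f ts where "\<theta> x = Fn f ts" "gflat Cs (\<theta> x) = Var undefined"
        by (cases "\<theta> x") (auto simp: gflat_def)
      then show False using e by simp
    qed
  qed
qed

lemma finite_good_atoms:
  assumes "finite Sig" "finite Cs" "finite V"
  shows "finite {a :: ('p, 'f, 'v) atm. good_atm Sig Cs a \<and> vars_atm a \<subseteq> V}"
proof -
  define T :: "('f, 'v) trm set" where "T = Var ` V \<union> (\<lambda>f. Fn f []) ` Cs"
  define n where "n = Max (snd ` Sig)"
  have fT: "finite T" using assms by (simp add: T_def)
  have "{a :: ('p, 'f, 'v) atm. good_atm Sig Cs a \<and> vars_atm a \<subseteq> V}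
        \<subseteq> (\<lambda>(p, ts). Atm p ts) ` (fst ` Sig \<times> {ts. set ts \<subseteq> T \<and> length ts \<le> n})"
  proof
    fix a :: "('p, 'f, 'v) atm" assume "a \<in> {a. good_atm Sig Cs a \<and> vars_atm a \<subseteq> V}"
    then obtain p ts where a: "a = Atm p ts" "(p, length ts) \<in> Sig" "\<forall>t\<in>set ts. good_trm Cs t"
      "\<Union> (set (map vars_trm ts)) \<subseteq> V"
      by (cases a) auto
    have "length ts \<le> n" unfolding n_def using a(2) assms(1)
      by (metis Max_ge finite_imageI image_eqI snd_conv)
    moreover have "set ts \<subseteq> T"
    proof
      fix t assume t: "t \<in> set ts"
      show "t \<in> T"
      proof (cases t)
        case (Var x)
        then have "x \<in> V" using a(4) t by force
        then show ?thesis using Var by (simp add: T_def)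
      next
        case (Fn f us) then show ?thesis using a(3) t by (auto simp: T_def)
      qed
    qed
    ultimately show "a \<in> (\<lambda>(p, ts). Atm p ts) ` (fst ` Sig \<times> {ts. set ts \<subseteq> T \<and> length ts \<le> n})"
      using a(1,2) by (auto simp: image_iff intro!: bexI[of _ "(p, length ts)"])
  qed
  moreover have "finite ((\<lambda>(p, ts). Atm p ts) ` (fst ` Sig \<times> {ts. set ts \<subseteq> T \<and> length ts \<le> n}))"
    using assms fT finite_lists_length_le by blast
  ultimately show ?thesis by (rule finite_subset)
qed

definition good_st :: "('p \<times> nat) set \<Rightarrow> 'f set \<Rightarrow> nat \<Rightarrow> nat \<Rightarrow> 'v set \<Rightarrow> (('p, 'f, 'v) goal \<times> ('p, 'f, 'v) goal) set" where
  "good_st Sig Cs n L V = {(A, H). good_goal Sig Cs A \<and> good_goal Sig Cs H \<and> length A \<le> n \<and> length H \<le> L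
       \<and> vars_goal A \<union> vars_goal H \<subseteq> V}"

lemma finite_good_st:
  fixes Sig :: "('p \<times> nat) set" and Cs :: "'f set" and V :: "'v set"
  assumes "finite Sig" "finite Cs" "finite V"
  shows "finite (good_st Sig Cs n L V :: (('p, 'f, 'v) goal \<times> ('p, 'f, 'v) goal) set)"
proof -
  define GA where "GA = {a :: ('p, 'f, 'v) atm. good_atm Sig Cs a \<and> vars_atm a \<subseteq> V}"
  have fGA: "finite GA" using finite_good_atoms[OF assms] by (simp add: GA_def)
  have "good_st Sig Cs n L V \<subseteq> {xs. set xs \<subseteq> GA \<and> length xs \<le> n} \<times> {xs. set xs \<subseteq> GA \<and> length xs \<le> L}"
    by (auto simp: good_st_def GA_def good_goal_def vars_goal_def)
  moreover have "finite ({xs. set xs \<subseteq> GA \<and> length xs \<le> n} \<times> {xs. set xs \<subseteq> GA \<and> length xs \<le> L})"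
    using fGA finite_lists_length_le by blast
  ultimately show ?thesis by (rule finite_subset)
qed

lemma card_vars_trm_good: "good_trm Cs t \<Longrightarrow> card (vars_trm t) \<le> 1"
  by (cases t) auto

lemma card_vars_list: "\<forall>t\<in>set ts. good_trm Cs t \<Longrightarrow> card (\<Union> (set (map vars_trm ts))) \<le> length ts"
proof (induction ts)
  case (Cons t ts)
  have "card (\<Union> (set (map vars_trm (t # ts)))) \<le> card (vars_trm t) + card (\<Union> (set (map vars_trm ts)))"
    by (simp add: card_Un_le)
  then show ?case using Cons card_vars_trm_good[of Cs t] by simp
qed simp

lemma card_vars_atm_good: "good_atm Sig Cs a \<Longrightarrow> finite Sig \<Longrightarrow> card (vars_atm a) \<le> Max (snd ` Sig)"
proof (cases a)
  case (Atm p ts)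
  assume g: "good_atm Sig Cs a" and f: "finite Sig"
  then have "length ts \<le> Max (snd ` Sig)" using Atm
    by simp (metis Max_ge finite_imageI image_eqI snd_conv)
  then show ?thesis using card_vars_list[of ts Cs] g Atm by simp
qed

lemma card_vars_goal_good: "good_goal Sig Cs G \<Longrightarrow> finite Sig \<Longrightarrow> card (vars_goal G) \<le> Max (snd ` Sig) * length G"
proof (induction G)
  case (Cons a G)
  have "card (vars_goal (a # G)) \<le> card (vars_atm a) + card (vars_goal G)"
    by (simp add: card_Un_le)
  then show ?case using Cons card_vars_atm_good[of Sig Cs a] by (simp add: good_goal_def)
qed simp

definition swp :: "'a \<Rightarrow> 'a \<Rightarrow> 'a \<Rightarrow> 'a" where
  "swp a b x = (if x = a then b else if x = b then a else x)"

lemma bij_swp: "bij (swp a b)"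
proof -
  have "swp a b \<circ> swp a b = id" by (auto simp: swp_def fun_eq_iff)
  then show ?thesis by (metis o_bij)
qed

lemma extend_bij:
  fixes h :: "'a \<Rightarrow> 'a"
  assumes "finite S" "inj_on h S"
  shows "\<exists>f. bij f \<and> (\<forall>x\<in>S. f x = h x)"
  using assms
proof (induction S rule: finite_induct)
  case empty have "bij (id::'a\<Rightarrow>'a)" by simp
  then show ?case by blast
next
  case (insert a S)
  then obtain f0 where f0: "bij f0" "\<forall>x\<in>S. f0 x = h x" by (auto simp: inj_on_insert)
  define b where "b = inv f0 (h a)"
  have fb: "f0 b = h a" using f0(1) by (simp add: b_def bij_is_surj surj_f_inv_f)
  define f where "f = f0 \<circ> swp a b"
  have "bij f" unfolding f_def using f0(1) bij_swp by (rule bij_comp[rotated])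
  moreover have "f a = h a" by (simp add: f_def swp_def fb)
  moreover have "f x = h x" if x: "x \<in> S" for x
  proof -
    have "x \<noteq> a" using insert x by auto
    moreover have "x \<noteq> b"
    proof
      assume "x = b"
      then have "h x = h a" using fb f0 x by simp
      then show False using insert(4) x \<open>x \<noteq> a\<close> by (auto simp: inj_on_def)
    qed
    ultimately show ?thesis using f0 x by (simp add: f_def swp_def)
  qed
  ultimately show ?case by auto
qed

type_synonym ('p, 'f, 'v) st = "('p, 'f, 'v) goal \<times> ('p, 'f, 'v) goal"

definition rnst :: "('v \<Rightarrow> 'v) \<Rightarrow> ('p, 'f, 'v) st \<Rightarrow> ('p, 'f, 'v) st" where
  "rnst f x = (subst_goal (ren f) (fst x), subst_goal (ren f) (snd x))"

definition svars :: "('p, 'f, 'v) st \<Rightarrow> 'v set" where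
  "svars x = vars_goal (fst x) \<union> vars_goal (snd x)"

definition variant :: "('p, 'f, 'v) st \<Rightarrow> ('p, 'f, 'v) st \<Rightarrow> bool" where
  "variant x y = (\<exists>f. bij f \<and> y = rnst f x)"

lemma rnst_comp: "rnst g (rnst f x) = rnst (g \<circ> f) x"
  by (simp add: rnst_def subst_goal_comp ren_comp)

lemma rnst_id: "rnst id x = x"
  by (simp add: rnst_def ren_id)

lemma rnst_inv: "bij f \<Longrightarrow> rnst (inv f) (rnst f x) = x"
  by (simp add: rnst_def goal_ren_inv)

lemma rnst_inv2: "bij f \<Longrightarrow> rnst f (rnst (inv f) x) = x"
  by (simp add: rnst_def goal_ren_inv2)

lemma svars_rnst: "svars (rnst f x) = f ` svars x"
  by (simp add: svars_def rnst_def vars_goal_ren image_Un)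

lemma finite_svars: "finite (svars x)"
  by (simp add: svars_def finite_vars_goal)

lemma variant_refl: "variant x x"
  unfolding variant_def by (rule exI[of _ id]) (simp add: rnst_id)

lemma variant_sym: "variant x y \<Longrightarrow> variant y x"
proof -
  assume "variant x y"
  then obtain f where f: "bij f" "y = rnst f x" by (auto simp: variant_def)
  then have "x = rnst (inv f) y" by (simp add: rnst_inv)
  then show ?thesis using f(1) bij_imp_bij_inv[OF f(1)] by (auto simp: variant_def)
qed

lemma variant_trans: "variant x y \<Longrightarrow> variant y z \<Longrightarrow> variant x z"
proof -
  assume "variant x y" "variant y z"
  then obtain f g where "bij f" "y = rnst f x" "bij g" "z = rnst g y" by (auto simp: variant_def)
  then have "bij (g \<circ> f)" "z = rnst (g \<circ> f) x" by (auto simp: rnst_comp intro: bij_comp)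
  then show ?thesis by (auto simp: variant_def)
qed

lemma variant_card: "variant x y \<Longrightarrow> card (svars y) = card (svars x)"
proof -
  assume "variant x y"
  then obtain f where "bij f" "y = rnst f x" by (auto simp: variant_def)
  then show ?thesis using card_image[OF inj_on_subset[OF bij_is_inj[OF \<open>bij f\<close>]], of "svars x"] by (simp add: svars_rnst)
qed

lemma rnst_cong: "(\<And>x. x \<in> svars s \<Longrightarrow> f x = g x) \<Longrightarrow> rnst f s = rnst g s"
proof -
  assume a: "\<And>x. x \<in> svars s \<Longrightarrow> f x = g x"
  have "subst_goal (ren f) (fst s) = subst_goal (ren g) (fst s)"
    by (rule subst_goal_cong) (simp add: a ren_def svars_def)
  moreover have "subst_goal (ren f) (snd s) = subst_goal (ren g) (snd s)"
    by (rule subst_goal_cong) (simp add: a ren_def svars_def)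
  ultimately show ?thesis by (simp add: rnst_def)
qed

definition canon :: "(nat \<Rightarrow> 'v) \<Rightarrow> ('p, 'f, 'v) st \<Rightarrow> ('p, 'f, 'v) st" where
  "canon vv x = (SOME y. variant x y \<and> svars y \<subseteq> vv ` {..< card (svars x)})"

lemma canon_ex:
  assumes "inj vv"
  shows "variant x (canon vv x) \<and> svars (canon vv x) \<subseteq> vv ` {..< card (svars x)}"
proof -
  define S where "S = svars x"
  define n where "n = card S"
  have fS: "finite S" by (simp add: S_def finite_svars)
  have cv: "card (vv ` {..<n}) = n" using card_image[OF inj_on_subset[OF assms], of "{..<n}"] by simp
  have cS: "card S = card (vv ` {..<n})" using cv unfolding n_def by argo
  have "\<exists>h. bij_betw h S (vv ` {..<n})"
    by (rule finite_same_card_bij[OF fS _ cS]) simp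
  then obtain h where h: "bij_betw h S (vv ` {..<n})" by blast
  obtain f where f: "bij f" "\<forall>x\<in>S. f x = h x"
    using extend_bij[OF fS bij_betw_imp_inj_on[OF h]] by blast
  have "svars (rnst f x) = f ` S" by (simp add: svars_rnst S_def)
  also have "\<dots> = h ` S" by (rule image_cong) (simp_all add: f(2))
  also have "\<dots> = vv ` {..<n}" using h by (simp add: bij_betw_def)
  finally have sv: "svars (rnst f x) \<subseteq> vv ` {..< card (svars x)}"
    unfolding n_def S_def by (rule equalityD1)
  have "variant x (rnst f x)" unfolding variant_def using f(1) by blast
  then have "variant x (rnst f x) \<and> svars (rnst f x) \<subseteq> vv ` {..< card (svars x)}"
    using sv by blast
  then show ?thesis unfolding canon_def by (rule someI)
qed

lemma canon_cong:
  assumes "variant x x'" shows "canon vv x = canon vv x'"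
proof -
  have "variant x y = variant x' y" for y
    using assms variant_sym variant_trans by blast
  moreover have "card (svars x) = card (svars x')" using variant_card[OF assms] by simp
  ultimately show ?thesis unfolding canon_def by simp
qed

lemma canon_idem: "inj vv \<Longrightarrow> canon vv (canon vv x) = canon vv x"
proof -
  assume "inj vv"
  then have "variant (canon vv x) x" using canon_ex variant_sym by blast
  then show ?thesis by (rule canon_cong)
qed

lemma canon_variant_eq: "inj vv \<Longrightarrow> variant (canon vv x) (canon vv y) \<Longrightarrow> canon vv x = canon vv y"
proof -
  assume "inj vv" "variant (canon vv x) (canon vv y)"
  then have "canon vv (canon vv x) = canon vv (canon vv y)" by (intro canon_cong) blast
  then show ?thesis by (simp add: canon_idem[OF \<open>inj vv\<close>])
qed

lemma good_rnst: "good_goal Sig Cs (fst x) \<Longrightarrow> good_goal Sig Cs (snd x) \<Longrightarrow>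
    good_goal Sig Cs (fst (rnst f x)) \<and> good_goal Sig Cs (snd (rnst f x))"
  by (simp add: rnst_def good_subst_goal good_ren)

lemma length_rnst: "length (fst (rnst f x)) = length (fst x)" "length (snd (rnst f x)) = length (snd x)"
  by (simp_all add: rnst_def)

lemma variant_good: "variant x y \<Longrightarrow> good_goal Sig Cs (fst x) \<Longrightarrow> good_goal Sig Cs (snd x) \<Longrightarrow>
    good_goal Sig Cs (fst y) \<and> good_goal Sig Cs (snd y)"
  unfolding variant_def using good_rnst by metis

lemma variant_length: "variant x y \<Longrightarrow> length (fst y) = length (fst x) \<and> length (snd y) = length (snd x)"
  unfolding variant_def using length_rnst by metis

lemma canon_in_good_st:
  assumes vv: "inj vv" and fS: "finite Sig"
    and g: "good_goal Sig Cs (fst x)" "good_goal Sig Cs (snd x)"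
    and l: "length (fst x) \<le> n" "length (snd x) \<le> L"
  shows "canon vv x \<in> good_st Sig Cs n L (vv ` {..< Max (snd ` Sig) * (n + L)})"
proof -
  have c: "variant x (canon vv x)" "svars (canon vv x) \<subseteq> vv ` {..< card (svars x)}"
    using canon_ex[OF vv] by blast+
  have "card (svars x) \<le> card (vars_goal (fst x)) + card (vars_goal (snd x))"
    by (simp add: svars_def card_Un_le)
  also have "\<dots> \<le> Max (snd ` Sig) * length (fst x) + Max (snd ` Sig) * length (snd x)"
    using card_vars_goal_good[OF g(1) fS] card_vars_goal_good[OF g(2) fS] by simp
  also have "\<dots> \<le> Max (snd ` Sig) * (n + L)"
    using l by (simp add: add_mono distrib_left)
  finally have "svars (canon vv x) \<subseteq> vv ` {..< Max (snd ` Sig) * (n + L)}"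
    using c(2) by auto
  then show ?thesis
    using variant_good[OF c(1) g] variant_length[OF c(1)] l
    by (cases "canon vv x") (auto simp: good_st_def svars_def)
qed

lemma konig:
  fixes E :: "'a \<Rightarrow> 'a \<Rightarrow> bool"
  assumes fin: "\<And>x. E\<^sup>*\<^sup>* r x \<Longrightarrow> finite {y. E x y}"
    and inf: "infinite {x. E\<^sup>*\<^sup>* r x}"
  shows "\<exists>f. f 0 = r \<and> (\<forall>k. E (f k) (f (Suc k))) \<and> inj f"
proof -
  define d where "d x = (LEAST n. (E ^^ n) r x)" for x
  define T where "T x y = (E\<^sup>*\<^sup>* r x \<and> E x y \<and> d y = Suc (d x))" for x y
  have dI: "(E ^^ (d x)) r x" if "E\<^sup>*\<^sup>* r x" for x
    using that unfolding d_def rtranclp_power by (metis LeastI)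
  have dle: "d x \<le> n" if "(E ^^ n) r x" for x n
    using that unfolding d_def by (rule Least_le)
  have d0: "d r = 0" using dle[of 0 r] by simp
  have reachT: "T\<^sup>*\<^sup>* r y" if "E\<^sup>*\<^sup>* r y" for y
    using that
  proof (induction "d y" arbitrary: y rule: less_induct)
    case less
    show ?case
    proof (cases "d y")
      case 0
      then have "(E ^^ 0) r y" using dI[OF less.prems] by simp
      then show ?thesis by simp
    next
      case (Suc n)
      then have "(E ^^ Suc n) r y" using dI[OF less.prems] by simp
      then obtain x where x: "(E ^^ n) r x" "E x y" by (rule relpowp_Suc_E)
      have rx: "E\<^sup>*\<^sup>* r x" using x(1) rtranclp_power by metis
      have "d x \<le> n" using dle[OF x(1)] .
      moreover have "(E ^^ Suc (d x)) r y" using dI[OF rx] x(2) by (rule relpowp_Suc_I)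
      then have "d y \<le> Suc (d x)" by (rule dle)
      ultimately have dx: "d x = n" using Suc by simp
      then have "T x y" using rx x(2) Suc by (simp add: T_def)
      moreover have "T\<^sup>*\<^sup>* r x" using less.hyps[of x] dx Suc rx by simp
      ultimately show ?thesis by simp
    qed
  qed
  define Infn where "Infn x = infinite {y. T\<^sup>*\<^sup>* x y}" for x
  have Tr: "E\<^sup>*\<^sup>* r y" if "T x y" for x y
    using that by (auto simp: T_def)
  have step: "\<exists>z. T x z \<and> Infn z" if "Infn x" "E\<^sup>*\<^sup>* r x" for x
  proof (rule ccontr)
    assume "\<not> (\<exists>z. T x z \<and> Infn z)"
    then have fz: "\<And>z. T x z \<Longrightarrow> finite {y. T\<^sup>*\<^sup>* z y}" by (auto simp: Infn_def)
    have "{z. T x z} \<subseteq> {z. E x z}" by (auto simp: T_def)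
    then have fT: "finite {z. T x z}" using fin[OF that(2)] by (rule finite_subset)
    have "{y. T\<^sup>*\<^sup>* x y} \<subseteq> insert x (\<Union>z\<in>{z. T x z}. {y. T\<^sup>*\<^sup>* z y})"
    proof
      fix y assume "y \<in> {y. T\<^sup>*\<^sup>* x y}"
      then have "T\<^sup>*\<^sup>* x y" by simp
      then show "y \<in> insert x (\<Union>z\<in>{z. T x z}. {y. T\<^sup>*\<^sup>* z y})"
        by (cases rule: converse_rtranclpE) auto
    qed
    moreover have "finite (insert x (\<Union>z\<in>{z. T x z}. {y. T\<^sup>*\<^sup>* z y}))"
      using fT fz by auto
    ultimately have "finite {y. T\<^sup>*\<^sup>* x y}" by (rule finite_subset)
    then show False using that(1) by (simp add: Infn_def)
  qed
  define f where "f = rec_nat r (\<lambda>k x. SOME z. T x z \<and> Infn z)"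
  have f0: "f 0 = r" by (simp add: f_def)
  have fS: "f (Suc k) = (SOME z. T (f k) z \<and> Infn z)" for k by (simp add: f_def)
  have inv: "Infn (f k) \<and> E\<^sup>*\<^sup>* r (f k)" for k
  proof (induction k)
    case 0
    have "{x. E\<^sup>*\<^sup>* r x} \<subseteq> {y. T\<^sup>*\<^sup>* r y}" using reachT by auto
    then have "Infn r" using inf unfolding Infn_def using finite_subset by blast
    then show ?case using f0 by simp
  next
    case (Suc k)
    have "T (f k) (f (Suc k)) \<and> Infn (f (Suc k))"
      unfolding fS using step[of "f k"] Suc by (metis (no_types, lifting) someI_ex)
    then show ?case using Tr by blast
  qed
  have Tf: "T (f k) (f (Suc k))" for k
    unfolding fS using step[of "f k"] inv[of k] by (metis (no_types, lifting) someI_ex)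
  have df: "d (f k) = k" for k
    by (induction k) (use f0 d0 Tf in \<open>auto simp: T_def\<close>)
  have "inj f" by (rule inj_on_inverseI[of _ d]) (simp add: df)
  moreover have "E (f k) (f (Suc k))" for k using Tf[of k] by (simp add: T_def)
  ultimately show ?thesis using f0 by blast
qed

lemma split_subseq:
  "subseq xs ys \<Longrightarrow> i < length xs \<Longrightarrow> \<exists>j<length ys. ys ! j = xs ! i \<and>
     subseq (take i xs) (take j ys) \<and> subseq (drop (Suc i) xs) (drop (Suc j) ys)"
proof (induction arbitrary: i rule: list_emb.induct)
  case (list_emb_Nil ys) then show ?case by simp
next
  case (list_emb_Cons xs ys y)
  then obtain j where "j < length ys" "ys ! j = xs ! i" "subseq (take i xs) (take j ys)"
    "subseq (drop (Suc i) xs) (drop (Suc j) ys)" by blast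
  then show ?case by (intro exI[of _ "Suc j"]) auto
next
  case (list_emb_Cons2 x y xs ys)
  show ?case
  proof (cases i)
    case 0 then show ?thesis using list_emb_Cons2 by (intro exI[of _ 0]) auto
  next
    case (Suc i')
    then obtain j where "j < length ys" "ys ! j = xs ! i'" "subseq (take i' xs) (take j ys)"
      "subseq (drop (Suc i') xs) (drop (Suc j) ys)" using list_emb_Cons2 by auto
    then show ?thesis using Suc list_emb_Cons2 by (intro exI[of _ "Suc j"]) auto
  qed
qed

lemma fresh_bij:
  fixes f :: "'v \<Rightarrow> 'v"
  assumes inf: "infinite (UNIV :: 'v set)" and V1: "finite V1" and V2: "finite V2" and d: "V1 \<inter> V2 = {}"
    and U: "finite U" and inj: "inj_on f V1"
  shows "\<exists>\<pi>. bij \<pi> \<and> (\<forall>x\<in>V1. \<pi> x = f x) \<and> \<pi> ` V2 \<inter> U = {}"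
proof -
  define W where "W = U \<union> f ` V1"
  have "finite W" using U V1 by (simp add: W_def)
  then have "infinite (UNIV - W)" using inf by (simp add: Diff_infinite_finite)
  then obtain B where B: "finite B" "card B = card V2" "B \<subseteq> UNIV - W"
    using infinite_arbitrarily_large by blast
  have "\<exists>k. bij_betw k V2 B" by (rule finite_same_card_bij) (use V2 B in auto)
  then obtain k where k: "bij_betw k V2 B" by blast
  define g where "g x = (if x \<in> V1 then f x else k x)" for x
  have "inj_on g V1" using inj by (simp add: g_def inj_on_def)
  moreover have "inj_on g V2" using k d by (auto simp: g_def inj_on_def bij_betw_def)
  moreover have "g ` (V1 - V2) \<inter> g ` (V2 - V1) = {}"
    using B k d by (auto simp: g_def W_def bij_betw_def)
  ultimately have "inj_on g (V1 \<union> V2)" by (simp add: inj_on_Un)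
  then obtain \<pi> where \<pi>: "bij \<pi>" "\<forall>x\<in>V1 \<union> V2. \<pi> x = g x"
    using extend_bij[of "V1 \<union> V2" g] V1 V2 by blast
  have "\<pi> ` V2 = k ` V2" using \<pi>(2) d by (auto simp: g_def image_def)
  then have "\<pi> ` V2 \<inter> U = {}" using k B by (auto simp: bij_betw_def W_def)
  moreover have "\<forall>x\<in>V1. \<pi> x = f x" using \<pi>(2) by (simp add: g_def)
  ultimately show ?thesis using \<pi>(1) by blast
qed

lemma comp_upto_Suc_goal:
  "subst_goal (comp_upto \<theta>s (Suc k)) G = subst_goal (\<theta>s k) (subst_goal (comp_upto \<theta>s k) G)"
  by (simp add: subst_goal_comp)

lemma comp_upto_0_goal: "subst_goal (comp_upto \<theta>s 0) G = G"
  by simp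

fun sig_of :: "('p, 'f, 'v) atm \<Rightarrow> 'p \<times> nat" where
  "sig_of (Atm p ts) = (p, length ts)"

fun args :: "('p, 'f, 'v) atm \<Rightarrow> ('f, 'v) trm list" where
  "args (Atm p ts) = ts"

definition fnames :: "('f, 'v) trm list \<Rightarrow> 'f set" where
  "fnames ts = {f. Fn f [] \<in> set ts}"

lemma finite_fnames: "finite (fnames ts)"
proof -
  have "fnames ts \<subseteq> (\<lambda>t. case t of Fn f _ \<Rightarrow> f | Var _ \<Rightarrow> undefined) ` set ts"
    by (force simp: fnames_def)
  then show ?thesis by (rule finite_subset) simp
qed

definition atoms0 :: "('p, 'f, 'v) clause set \<Rightarrow> ('p, 'f, 'v) goal \<Rightarrow> ('p, 'f, 'v) atm set" where
  "atoms0 P G = set G \<union> (\<Union>c\<in>P. insert (fst c) (set (snd c)))"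

lemma finite_atoms0: "finite P \<Longrightarrow> finite (atoms0 P G)"
  by (simp add: atoms0_def)

lemma good_atoms0:
  assumes "ff_program P" "ff_goal G" "a \<in> atoms0 P G"
  shows "good_atm (sig_of ` atoms0 P G) (\<Union>b\<in>atoms0 P G. fnames (args b)) a"
proof -
  obtain p ts where a: "a = Atm p ts" by (cases a)
  have ff: "ff_atm a" using assms
    by (auto simp: atoms0_def ff_program_def ff_goal_def)
  have "good_trm (\<Union>b\<in>atoms0 P G. fnames (args b)) t" if t: "t \<in> set ts" for t
  proof (cases t)
    case (Fn f us)
    then have "us = []" using ff a t by fastforce
    then show ?thesis using Fn t a assms(3) by (auto simp: fnames_def intro!: bexI[of _ a])
  qed simp
  moreover have "(p, length ts) \<in> sig_of ` atoms0 P G" using assms(3) a by force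
  ultimately show ?thesis using a by simp
qed

context
  fixes P :: "('p, 'f, 'v) clause set" and G :: "('p, 'f, 'v) goal"
  assumes infV: "infinite (UNIV :: 'v set)" and finP: "finite P"
    and ffP: "ff_program P" and ffG: "ff_goal G"
begin

definition "Sig0 = sig_of ` atoms0 P G"
definition "Cs0 = (\<Union>b\<in>atoms0 P G. fnames (args b))"
definition "B0 = Max ((\<lambda>c. length (snd c)) ` P)"
definition vv0 :: "nat \<Rightarrow> 'v" where "vv0 = (SOME f. inj f)"

lemma inj_vv0: "inj vv0"
proof -
  obtain f :: "nat \<Rightarrow> 'v" where "inj f" using infinite_countable_subset[OF infV] by blast
  then show ?thesis unfolding vv0_def by (metis someI_ex)
qed

lemma finite_Sig0: "finite Sig0"
  by (simp add: Sig0_def finite_atoms0 finP)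

lemma finite_Cs0: "finite Cs0"
  by (simp add: Cs0_def finite_atoms0 finP finite_fnames)

lemma good_a0: "a \<in> atoms0 P G \<Longrightarrow> good_atm Sig0 Cs0 a"
  using good_atoms0[OF ffP ffG] by (simp add: Sig0_def Cs0_def)

lemma good_G: "good_goal Sig0 Cs0 G"
  using good_a0 by (auto simp: good_goal_def atoms0_def)

lemma good_astep:
  assumes gA: "good_goal Sig0 Cs0 A" and gH: "good_goal Sig0 Cs0 H"
    and st: "astep_w P A H c \<xi> \<theta> i A' H'"
  shows "good_goal Sig0 Cs0 A' \<and> good_goal Sig0 Cs0 H' \<and> length A' = length A \<and> length H' \<le> length H + B0"
proof -
  from st have c: "c \<in> P" and i: "i < length H" and mgu: "is_mgu \<theta> (subst_atm \<xi> (fst c)) (H ! i)"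
    and A': "A' = subst_goal \<theta> A"
    and H': "H' = subst_goal \<theta> (take i H @ subst_goal \<xi> (snd c) @ drop (Suc i) H)"
    and r: "is_renaming \<xi>"
    by (auto simp: astep_w_def)
  obtain g where g: "\<xi> = ren g" using r by (auto simp: is_renaming_ren)
  have "fst c \<in> atoms0 P G" using c by (auto simp: atoms0_def)
  then have gh: "good_atm Sig0 Cs0 (subst_atm \<xi> (fst c))"
    unfolding g by (intro good_subst_atm good_a0 good_ren)
  have "good_goal Sig0 Cs0 (snd c)" using c good_a0 by (auto simp: good_goal_def atoms0_def)
  then have gb: "good_goal Sig0 Cs0 (subst_goal \<xi> (snd c))"
    unfolding g by (intro good_subst_goal good_ren)
  have gs: "good_subst Cs0 \<theta>"
    using mgu_good[OF gh good_goal_nth[OF gH i] mgu] .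
  have "good_goal Sig0 Cs0 H'" unfolding H' using gH gb gs
    by (intro good_subst_goal) (auto intro: good_goal_take good_goal_drop)
  moreover have "good_goal Sig0 Cs0 A'" unfolding A' using gA gs by (rule good_subst_goal)
  moreover have "length (snd c) \<le> B0" unfolding B0_def using c finP by (auto intro: Max_ge)
  then have "length H' \<le> length H + B0" unfolding H' using i by simp
  ultimately show ?thesis by (simp add: A')
qed

definition Estep :: "('p, 'f, 'v) st \<Rightarrow> ('p, 'f, 'v) st \<Rightarrow> bool" where
  "Estep y z = (\<exists>c \<xi> \<theta> i A' H'. astep_w P (fst y) (snd y) c \<xi> \<theta> i A' H' \<and> z = canon vv0 (A', H'))"

definition "root0 = canon vv0 (G, G)"

lemma reach_good:
  assumes "Estep\<^sup>*\<^sup>* root0 x"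
  shows "good_goal Sig0 Cs0 (fst x) \<and> good_goal Sig0 Cs0 (snd x) \<and> length (fst x) = length G"
  using assms
proof (induction rule: rtranclp_induct)
  case base
  have "variant (G, G) root0" unfolding root0_def using canon_ex[OF inj_vv0] by blast
  moreover have "good_goal Sig0 Cs0 (fst (G, G))" "good_goal Sig0 Cs0 (snd (G, G))" using good_G by simp_all
  ultimately show ?case using variant_good[of "(G, G)" root0] variant_length[of "(G, G)" root0] by auto
next
  case (step y z)
  then obtain c \<xi> \<theta> i A' H' where st: "astep_w P (fst y) (snd y) c \<xi> \<theta> i A' H'" and z: "z = canon vv0 (A', H')"
    by (auto simp: Estep_def)
  have g: "good_goal Sig0 Cs0 A' \<and> good_goal Sig0 Cs0 H' \<and> length A' = length (fst y)"
    using good_astep[OF _ _ st] step.IH by auto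
  have "variant (A', H') z" unfolding z using canon_ex[OF inj_vv0] by blast
  then show ?case using variant_good[of "(A', H')" z Sig0 Cs0] variant_length[of "(A', H')" z] g step.IH by auto
qed

lemma fin_branch:
  assumes "Estep\<^sup>*\<^sup>* root0 x"
  shows "finite {z. Estep x z}"
proof -
  define L where "L = length (snd x) + B0"
  have "{z. Estep x z} \<subseteq> good_st Sig0 Cs0 (length G) L (vv0 ` {..< Max (snd ` Sig0) * (length G + L)})"
  proof
    fix z assume "z \<in> {z. Estep x z}"
    then obtain c \<xi> \<theta> i A' H' where st: "astep_w P (fst x) (snd x) c \<xi> \<theta> i A' H'" and z: "z = canon vv0 (A', H')"
      by (auto simp: Estep_def)
    have g: "good_goal Sig0 Cs0 A' \<and> good_goal Sig0 Cs0 H' \<and> length A' = length (fst x) \<and> length H' \<le> length (snd x) + B0"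
      using good_astep[OF _ _ st] reach_good[OF assms] by auto
    have g2: "good_goal Sig0 Cs0 (fst (A', H'))" "good_goal Sig0 Cs0 (snd (A', H'))"
      "length (fst (A', H')) \<le> length G" "length (snd (A', H')) \<le> L"
      using g reach_good[OF assms] by (simp_all add: L_def)
    show "z \<in> good_st Sig0 Cs0 (length G) L (vv0 ` {..< Max (snd ` Sig0) * (length G + L)})"
      unfolding z by (rule canon_in_good_st[OF inj_vv0 finite_Sig0 g2])
  qed
  then show ?thesis using finite_good_st[OF finite_Sig0 finite_Cs0] finite_subset by blast
qed

lemma canon_step:
  assumes st: "astep_w P (fst s) (snd s) c \<xi> \<theta> i A' H'"
  shows "Estep (canon vv0 s) (canon vv0 (A', H'))"
proof -
  have "variant s (canon vv0 s)" using canon_ex[OF inj_vv0] by blast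
  then obtain \<rho> where \<rho>: "bij \<rho>" "canon vv0 s = rnst \<rho> s" by (auto simp: variant_def)
  have st2: "astep_w P (fst (rnst \<rho> s)) (snd (rnst \<rho> s)) c (subst_comp \<xi> (ren \<rho>)) (conjs \<rho> \<theta>) i
      (subst_goal (ren \<rho>) A') (subst_goal (ren \<rho>) H')"
    using astep_equiv[OF \<rho>(1) st] by (simp add: rnst_def)
  have "variant (A', H') (subst_goal (ren \<rho>) A', subst_goal (ren \<rho>) H')"
    using \<rho>(1) by (auto simp: variant_def rnst_def)
  then have "canon vv0 (subst_goal (ren \<rho>) A', subst_goal (ren \<rho>) H') = canon vv0 (A', H')"
    using canon_cong variant_sym by metis
  then show ?thesis unfolding Estep_def \<rho>(2) using st2 by metis
qed


lemma mirror:
  assumes D: "inf_rsld_deriv P G Gs Ns \<alpha>s cs \<xi>s \<theta>s"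
  shows "\<exists>M. \<forall>k. subseq (Ns k) (M k) \<and> Estep\<^sup>*\<^sup>* root0 (canon vv0 (subst_goal (comp_upto \<theta>s k) G, M k))"
proof -
  define A where "A k = subst_goal (comp_upto \<theta>s k) G" for k
  define U where "U k = vars_goal G \<union> (\<Union>l<k. vars_clause (subst_clause (\<xi>s l) (cs l)))" for k
  define MS where "MS k M M' = (\<exists>j. astep_w P (A k) M (cs k) (\<xi>s k) (\<theta>s k) j (A (Suc k)) M' \<and> subseq (Gs (Suc k)) M')"
    for k M M'
  have AS: "A (Suc k) = subst_goal (\<theta>s k) (A k)" for k unfolding A_def by (rule comp_upto_Suc_goal)
  have subN: "subseq (Ns k) M" if "subseq (Gs k) M" for k M
  proof -
    from D have "reduced (Gs k) (\<alpha>s k) (Ns k) (vars_goal (subst_goal (comp_upto \<theta>s k) G))"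
      by (auto simp: inf_rsld_deriv_def)
    then have "subseq (Ns k) (Gs k)" by (simp add: reduced_def)
    then show ?thesis using that by (rule subseq_order.trans)
  qed
  have ex: "\<exists>M'. MS k M M'" if that1: "subseq (Gs k) M" and that2: "vars_goal (A k) \<union> vars_goal M \<subseteq> U k" for k M
  proof -
    from D have sl: "sld_step P (Ns k) (cs k) (\<xi>s k) (\<theta>s k) (Gs (Suc k))" and sa: "standardised_apart G cs \<xi>s k"
      by (auto simp: inf_rsld_deriv_def)
    have sub: "subseq (Ns k) M" using subN[OF that1] .
    from sl obtain i where c: "cs k \<in> P" "is_renaming (\<xi>s k)" "i < length (Ns k)" "idempotent (\<theta>s k)"
      "relevant (\<theta>s k) (subst_atm (\<xi>s k) (fst (cs k))) (Ns k ! i)"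
      "is_mgu (\<theta>s k) (subst_atm (\<xi>s k) (fst (cs k))) (Ns k ! i)"
      "Gs (Suc k) = subst_goal (\<theta>s k) (take i (Ns k) @ subst_goal (\<xi>s k) (snd (cs k)) @ drop (Suc i) (Ns k))"
      by (auto simp: sld_step_def)
    from split_subseq[OF sub c(3)] obtain j where j: "j < length M" "M ! j = Ns k ! i"
      "subseq (take i (Ns k)) (take j M)" "subseq (drop (Suc i) (Ns k)) (drop (Suc j) M)" by blast
    define M' where "M' = subst_goal (\<theta>s k) (take j M @ subst_goal (\<xi>s k) (snd (cs k)) @ drop (Suc j) M)"
    have "subseq (take i (Ns k) @ subst_goal (\<xi>s k) (snd (cs k)) @ drop (Suc i) (Ns k))
                 (take j M @ subst_goal (\<xi>s k) (snd (cs k)) @ drop (Suc j) M)"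
      by (intro list_emb_append_mono j(3,4) subseq_order.order_refl)
    then have sg: "subseq (Gs (Suc k)) M'" unfolding M'_def c(7) subst_goal_def by (rule subseq_map)
    have disj: "vars_clause (subst_clause (\<xi>s k) (cs k)) \<inter> (vars_goal (A k) \<union> vars_goal M) = {}"
      using sa that2 by (auto simp: standardised_apart_def U_def)
    have "astep_w P (A k) M (cs k) (\<xi>s k) (\<theta>s k) j (A (Suc k)) M'"
      unfolding astep_w_def M'_def AS using c j disj by simp
    then show ?thesis using sg unfolding MS_def by blast
  qed
  have varstep: "vars_goal (A (Suc k)) \<union> vars_goal M' \<subseteq> U (Suc k)"
    if "MS k M M'" "vars_goal (A k) \<union> vars_goal M \<subseteq> U k" for k M M'
  proof -
    from that(1) obtain j where st: "astep_w P (A k) M (cs k) (\<xi>s k) (\<theta>s k) j (A (Suc k)) M'"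
      by (auto simp: MS_def)
    then have rel: "subst_range_vars (\<theta>s k) \<subseteq> vars_atm (subst_atm (\<xi>s k) (fst (cs k))) \<union> vars_atm (M ! j)"
      and j: "j < length M"
      and M': "M' = subst_goal (\<theta>s k) (take j M @ subst_goal (\<xi>s k) (snd (cs k)) @ drop (Suc j) M)"
      by (auto simp: astep_w_def relevant_def)
    have UU: "U k \<subseteq> U (Suc k)" by (auto simp: U_def)
    have cl: "vars_clause (subst_clause (\<xi>s k) (cs k)) \<subseteq> U (Suc k)" by (auto simp: U_def)
    then have h1: "vars_atm (subst_atm (\<xi>s k) (fst (cs k))) \<subseteq> U (Suc k)"
      and h2: "vars_goal (subst_goal (\<xi>s k) (snd (cs k))) \<subseteq> U (Suc k)"
      by (auto simp: vars_clause_def subst_clause_def)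
    have h3: "vars_atm (M ! j) \<subseteq> U (Suc k)" using vars_goal_nth[OF j] that(2) UU by blast
    have rr: "subst_range_vars (\<theta>s k) \<subseteq> U (Suc k)" using rel h1 h3 by blast
    have "vars_goal (A (Suc k)) \<subseteq> U (Suc k)"
      unfolding AS using vars_subst_goal[of "\<theta>s k" "A k"] that(2) UU rr by blast
    moreover have "vars_goal M' \<subseteq> U (Suc k)"
    proof -
      have "vars_goal (take j M @ subst_goal (\<xi>s k) (snd (cs k)) @ drop (Suc j) M) \<subseteq> U (Suc k)"
        unfolding vars_goal_append using vars_goal_take[of j M] vars_goal_drop[of "Suc j" M] that(2) UU h2 by blast
      then show ?thesis unfolding M'
        using vars_subst_goal[of "\<theta>s k" "take j M @ subst_goal (\<xi>s k) (snd (cs k)) @ drop (Suc j) M"] rr by blast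
    qed
    ultimately show ?thesis by blast
  qed
  define Mf where "Mf = rec_nat G (\<lambda>k M. SOME M'. MS k M M')"
  have Mf0: "Mf 0 = G" by (simp add: Mf_def)
  have MfS: "Mf (Suc k) = (SOME M'. MS k (Mf k) M')" for k by (simp add: Mf_def)
  have A0: "A 0 = G" by (simp add: A_def)
  have G0: "Gs 0 = G" using D by (simp add: inf_rsld_deriv_def)
  have inv: "subseq (Gs k) (Mf k) \<and> vars_goal (A k) \<union> vars_goal (Mf k) \<subseteq> U k" for k
  proof (induction k)
    case 0 then show ?case by (simp add: Mf0 A0 G0 U_def)
  next
    case (Suc k)
    have "MS k (Mf k) (Mf (Suc k))" unfolding MfS using ex[of k "Mf k"] Suc by (metis someI_ex)
    then show ?case using varstep[of k "Mf k" "Mf (Suc k)"] Suc by (auto simp: MS_def)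
  qed
  have ms: "MS k (Mf k) (Mf (Suc k))" for k unfolding MfS using ex[of k "Mf k"] inv[of k] by (metis someI_ex)
  have reach: "Estep\<^sup>*\<^sup>* root0 (canon vv0 (A k, Mf k))" for k
  proof (induction k)
    case 0 then show ?case by (simp add: Mf0 A0 root0_def)
  next
    case (Suc k)
    from ms[of k] obtain j where "astep_w P (fst (A k, Mf k)) (snd (A k, Mf k)) (cs k) (\<xi>s k) (\<theta>s k) j (A (Suc k)) (Mf (Suc k))"
      by (auto simp: MS_def)
    then have "Estep (canon vv0 (A k, Mf k)) (canon vv0 (A (Suc k), Mf (Suc k)))" by (rule canon_step)
    then show ?case using Suc by simp
  qed
  show ?thesis using reach inv subN unfolding A_def by blast
qed


lemma y_canon:
  assumes y0: "y 0 = root0" and ys: "\<forall>k. Estep (y k) (y (Suc k))"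
  shows "\<exists>s. y k = canon vv0 s"
proof (cases k)
  case 0 then show ?thesis using y0 by (auto simp: root0_def)
next
  case (Suc n) then show ?thesis using ys[rule_format, of n] by (auto simp: Estep_def)
qed

lemma realize:
  assumes y0: "y 0 = root0" and ys: "\<forall>k. Estep (y k) (y (Suc k))" and iy: "inj y"
  shows "\<exists>Gs cs \<xi>s \<theta>s. inf_sld_deriv P G Gs cs \<xi>s \<theta>s \<and> \<not> evr_pruned G \<theta>s Gs"
proof -
  have "\<forall>k. \<exists>c \<xi> \<theta> i A' H'. astep_w P (fst (y k)) (snd (y k)) c \<xi> \<theta> i A' H' \<and> y (Suc k) = canon vv0 (A', H')"
    using ys by (auto simp: Estep_def)
  then obtain cw \<xi>w \<theta>w iw Aw Hw where W: "\<And>k. astep_w P (fst (y k)) (snd (y k)) (cw k) (\<xi>w k) (\<theta>w k) (iw k) (Aw k) (Hw k)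
      \<and> y (Suc k) = canon vv0 (Aw k, Hw k)"
    by metis
  have "\<forall>k. \<exists>\<rho>. bij \<rho> \<and> y (Suc k) = rnst \<rho> (Aw k, Hw k)"
  proof
    fix k
    have "variant (Aw k, Hw k) (y (Suc k))" using W[of k] canon_ex[OF inj_vv0, of "(Aw k, Hw k)"] by simp
    then show "\<exists>\<rho>. bij \<rho> \<and> y (Suc k) = rnst \<rho> (Aw k, Hw k)" by (simp add: variant_def)
  qed
  then obtain \<rho>w where R: "\<And>k. bij (\<rho>w k) \<and> y (Suc k) = rnst (\<rho>w k) (Aw k, Hw k)" by metis
  have "variant (G, G) (y 0)" using y0 canon_ex[OF inj_vv0, of "(G, G)"] by (simp add: root0_def)
  then obtain \<rho>0 where R0: "bij \<rho>0" "y 0 = rnst \<rho>0 (G, G)" by (auto simp: variant_def)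
  define V2 where "V2 k = vars_clause (subst_clause (\<xi>w k) (cw k))" for k
  define PI :: "nat \<Rightarrow> ('v \<Rightarrow> 'v) \<Rightarrow> 'v set \<Rightarrow> 'v \<Rightarrow> 'v" where "PI k f U = (SOME \<pi>. bij \<pi> \<and> (\<forall>x\<in>svars (y k). \<pi> x = f x) \<and> \<pi> ` V2 k \<inter> U = {})" for k f U
  define F where "F = rec_nat (inv \<rho>0, vars_goal G)
      (\<lambda>k p. (PI k (fst p) (snd p) \<circ> inv (\<rho>w k), snd p \<union> PI k (fst p) (snd p) ` V2 k))"
  define fr where "fr k = fst (F k)" for k
  define Ur where "Ur k = snd (F k)" for k
  define \<pi> where "\<pi> k = PI k (fr k) (Ur k)" for k
  have F0: "fr 0 = inv \<rho>0" "Ur 0 = vars_goal G" by (simp_all add: fr_def Ur_def F_def)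
  have FS: "fr (Suc k) = \<pi> k \<circ> inv (\<rho>w k)" "Ur (Suc k) = Ur k \<union> \<pi> k ` V2 k" for k
    by (simp_all add: fr_def Ur_def F_def \<pi>_def)
  define \<xi>r where "\<xi>r k = subst_comp (\<xi>w k) (ren (\<pi> k))" for k
  define \<theta>r where "\<theta>r k = conjs (\<pi> k) (\<theta>w k)" for k
  define Gr where "Gr k = snd (rnst (fr k) (y k))" for k
  have pi_prop: "bij (\<pi> k) \<and> (\<forall>x\<in>svars (y k). \<pi> k x = fr k x) \<and> \<pi> k ` V2 k \<inter> Ur k = {}"
    if "bij (fr k)" "finite (Ur k)" for k
  proof -
    have d: "svars (y k) \<inter> V2 k = {}" using W[of k] by (auto simp: astep_w_def svars_def V2_def)
    have ij: "inj_on (fr k) (svars (y k))" using that(1) bij_is_inj inj_on_subset by blast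
    have "\<exists>p. bij p \<and> (\<forall>x\<in>svars (y k). p x = fr k x) \<and> p ` V2 k \<inter> Ur k = {}"
      by (rule fresh_bij[OF infV finite_svars _ d that(2) ij]) (simp add: V2_def finite_vars_clause)
    then show ?thesis unfolding \<pi>_def PI_def by (rule someI_ex)
  qed
  have stepfacts: "rnst (\<pi> k) (y k) = rnst (fr k) (y k) \<and> rnst (fr (Suc k)) (y (Suc k)) = rnst (\<pi> k) (Aw k, Hw k)
      \<and> astep_w P (fst (rnst (\<pi> k) (y k))) (snd (rnst (\<pi> k) (y k))) (cw k) (\<xi>r k) (\<theta>r k) (iw k)
           (subst_goal (ren (\<pi> k)) (Aw k)) (subst_goal (ren (\<pi> k)) (Hw k))"
    if "bij (fr k)" "finite (Ur k)" for k
  proof -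
    have pp: "bij (\<pi> k)" "\<forall>x\<in>svars (y k). \<pi> k x = fr k x" using pi_prop[OF that] by auto
    have a: "rnst (\<pi> k) (y k) = rnst (fr k) (y k)" by (rule rnst_cong) (use pp in auto)
    have "rnst (fr (Suc k)) (y (Suc k)) = rnst (\<pi> k \<circ> inv (\<rho>w k)) (rnst (\<rho>w k) (Aw k, Hw k))"
      using R[of k] by (simp add: FS)
    also have "\<dots> = rnst (\<pi> k) (rnst (inv (\<rho>w k)) (rnst (\<rho>w k) (Aw k, Hw k)))"
      by (simp only: rnst_comp o_assoc)
    also have "\<dots> = rnst (\<pi> k) (Aw k, Hw k)" using R[of k] by (simp add: rnst_inv)
    finally have b: "rnst (fr (Suc k)) (y (Suc k)) = rnst (\<pi> k) (Aw k, Hw k)" .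
    have c: "astep_w P (fst (rnst (\<pi> k) (y k))) (snd (rnst (\<pi> k) (y k))) (cw k) (\<xi>r k) (\<theta>r k) (iw k)
           (subst_goal (ren (\<pi> k)) (Aw k)) (subst_goal (ren (\<pi> k)) (Hw k))"
      using astep_equiv[OF pp(1), of P "fst (y k)" "snd (y k)" "cw k" "\<xi>w k" "\<theta>w k" "iw k" "Aw k" "Hw k"] W[of k]
      by (simp add: rnst_def \<xi>r_def \<theta>r_def)
    show ?thesis using a b c by blast
  qed
  have inv: "bij (fr k) \<and> finite (Ur k) \<and> vars_goal G \<union> (\<Union>l<k. vars_clause (subst_clause (\<xi>r l) (cw l))) \<subseteq> Ur k
      \<and> fst (rnst (fr k) (y k)) = subst_goal (comp_upto \<theta>r k) G" for k
  proof (induction k)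
    case 0
    have "fst (rnst (fr 0) (y 0)) = G" using R0 by (simp add: F0 rnst_inv)
    then show ?case using R0 bij_imp_bij_inv[OF R0(1)] by (simp add: F0 finite_vars_goal)
  next
    case (Suc k)
    then have h: "bij (fr k)" "finite (Ur k)" by auto
    have pp: "bij (\<pi> k)" using pi_prop[OF h] by auto
    note sf = stepfacts[OF h]
    have b1: "bij (fr (Suc k))" unfolding FS using pp R[of k] by (intro bij_comp bij_imp_bij_inv) auto
    have b2: "finite (Ur (Suc k))" unfolding FS using h(2) by (simp add: V2_def finite_vars_clause)
    have vc: "vars_clause (subst_clause (\<xi>r k) (cw k)) = \<pi> k ` V2 k"
      by (simp add: \<xi>r_def V2_def vars_clause_ren)
    have b3: "vars_goal G \<union> (\<Union>l<Suc k. vars_clause (subst_clause (\<xi>r l) (cw l))) \<subseteq> Ur (Suc k)"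
      using Suc.IH vc unfolding FS by (auto simp: lessThan_Suc)
    have "fst (rnst (fr (Suc k)) (y (Suc k))) = subst_goal (ren (\<pi> k)) (Aw k)"
      using sf by (simp add: rnst_def)
    also have "\<dots> = subst_goal (ren (\<pi> k)) (subst_goal (\<theta>w k) (fst (y k)))"
      using W[of k] by (simp add: astep_w_def)
    also have "\<dots> = subst_goal (\<theta>r k) (subst_goal (ren (\<pi> k)) (fst (y k)))"
      by (simp add: \<theta>r_def conj_goal[OF pp])
    also have "subst_goal (ren (\<pi> k)) (fst (y k)) = fst (rnst (fr k) (y k))"
      using sf by (metis fst_conv rnst_def)
    also have "subst_goal (\<theta>r k) (fst (rnst (fr k) (y k))) = subst_goal (comp_upto \<theta>r (Suc k)) G"
      using Suc.IH comp_upto_Suc_goal by metis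
    finally show ?case using b1 b2 b3 by blast
  qed
  have deriv: "inf_sld_deriv P G Gr cw \<xi>r \<theta>r"
    unfolding inf_sld_deriv_def
  proof (intro conjI allI)
    show "Gr 0 = G" using R0 by (simp add: Gr_def F0 rnst_inv)
  next
    fix k
    have h: "bij (fr k)" "finite (Ur k)" using inv[of k] by auto
    note sf = stepfacts[OF h]
    have e1: "snd (rnst (\<pi> k) (y k)) = Gr k" unfolding Gr_def by (rule arg_cong[OF conjunct1[OF sf]])
    have "snd (rnst (\<pi> k) (Aw k, Hw k)) = subst_goal (ren (\<pi> k)) (Hw k)" by (simp add: rnst_def)
    then have e2: "subst_goal (ren (\<pi> k)) (Hw k) = Gr (Suc k)"
      unfolding Gr_def using conjunct1[OF conjunct2[OF sf]] by simp
    have st: "astep_w P (fst (rnst (\<pi> k) (y k))) (Gr k) (cw k) (\<xi>r k) (\<theta>r k) (iw k)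
           (subst_goal (ren (\<pi> k)) (Aw k)) (Gr (Suc k))"
      using conjunct2[OF conjunct2[OF sf]] unfolding e1 e2 .
    show "sld_step P (Gr k) (cw k) (\<xi>r k) (\<theta>r k) (Gr (Suc k))"
      using st unfolding astep_w_def sld_step_def by blast
    have vc: "vars_clause (subst_clause (\<xi>r k) (cw k)) = \<pi> k ` V2 k"
      by (simp add: \<xi>r_def V2_def vars_clause_ren)
    have u1: "vars_goal G \<union> (\<Union>l<k. vars_clause (subst_clause (\<xi>r l) (cw l))) \<subseteq> Ur k"
      using inv[of k] by blast
    have u2: "\<pi> k ` V2 k \<inter> Ur k = {}" using pi_prop[OF h] by blast
    show "standardised_apart G cw \<xi>r k"
      unfolding standardised_apart_def vc using u1 u2 by blast
  qed
  have "\<not> evr_pruned G \<theta>r Gr"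
  proof
    assume "evr_pruned G \<theta>r Gr"
    then obtain i j \<tau> where ij: "i < j" "is_renaming \<tau>"
      "subst_goal (comp_upto \<theta>r j) G = subst_goal \<tau> (subst_goal (comp_upto \<theta>r i) G)" "Gr j = subst_goal \<tau> (Gr i)"
      by (auto simp: evr_pruned_def)
    obtain t where t: "bij t" "\<tau> = ren t" using ij(2) by (auto simp: is_renaming_ren)
    have "rnst (fr j) (y j) = rnst t (rnst (fr i) (y i))"
      using ij(3,4) inv[of i] inv[of j] t(2) by (simp add: rnst_def Gr_def prod_eq_iff)
    then have "variant (rnst (fr i) (y i)) (rnst (fr j) (y j))" using t(1) by (auto simp: variant_def)
    moreover have "variant (y i) (rnst (fr i) (y i))" using inv[of i] by (auto simp: variant_def)
    moreover have "variant (y j) (rnst (fr j) (y j))" using inv[of j] by (auto simp: variant_def)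
    then have "variant (rnst (fr j) (y j)) (y j)" by (rule variant_sym)
    ultimately have "variant (y i) (y j)" using variant_trans by blast
    moreover obtain si sj where "y i = canon vv0 si" "y j = canon vv0 sj"
      using y_canon[OF y0 ys] by metis
    ultimately have "y i = y j" using canon_variant_eq[OF inj_vv0] by metis
    then show False using iy ij(1) by (auto dest: injD)
  qed
  then show ?thesis using deriv by blast
qed


lemma main:
  assumes hyp: "\<forall>Gs cs \<xi>s \<theta>s. inf_sld_deriv P G Gs cs \<xi>s \<theta>s \<longrightarrow> evr_pruned G \<theta>s Gs"
    and D: "inf_rsld_deriv P G Gs Ns \<alpha>s cs \<xi>s \<theta>s"
  shows "evr_pruned G \<theta>s Ns"
proof (rule ccontr)
  assume np: "\<not> evr_pruned G \<theta>s Ns"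
  define A where "A k = subst_goal (comp_upto \<theta>s k) G" for k
  obtain M where M: "\<And>k. subseq (Ns k) (M k) \<and> Estep\<^sup>*\<^sup>* root0 (canon vv0 (A k, M k))"
    using mirror[OF D] unfolding A_def by blast
  show False
  proof (cases "\<exists>L. \<forall>k. length (Ns k) \<le> L")
    case True
    then obtain L where L: "\<And>k. length (Ns k) \<le> L" by blast
    have gk: "good_goal Sig0 Cs0 (A k) \<and> good_goal Sig0 Cs0 (Ns k) \<and> length (A k) = length G" for k
    proof -
      define x where "x = canon vv0 (A k, M k)"
      have r: "good_goal Sig0 Cs0 (fst x) \<and> good_goal Sig0 Cs0 (snd x) \<and> length (fst x) = length G"
        unfolding x_def using reach_good M by blast
      have "variant (A k, M k) x" unfolding x_def using canon_ex[OF inj_vv0] by blast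
      then have v: "variant x (A k, M k)" by (rule variant_sym)
      have g1: "good_goal Sig0 Cs0 (A k) \<and> good_goal Sig0 Cs0 (M k)"
        using variant_good[OF v] r by simp
      have l1: "length (A k) = length G" using variant_length[OF v] r by simp
      have "set (Ns k) \<subseteq> set (M k)"
      proof
        fix a assume "a \<in> set (Ns k)"
        then obtain b where "b \<in> set (M k)" "a = b" using list_emb_set[OF conjunct1[OF M[of k]]] by metis
        then show "a \<in> set (M k)" by simp
      qed
      then have "good_goal Sig0 Cs0 (Ns k)" using g1 by (auto simp: good_goal_def)
      then show ?thesis using g1 l1 by blast
    qed
    define c where "c k = canon vv0 (A k, Ns k)" for k
    have "range c \<subseteq> good_st Sig0 Cs0 (length G) L (vv0 ` {..< Max (snd ` Sig0) * (length G + L)})"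
    proof
      fix z assume "z \<in> range c"
      then obtain k where z: "z = c k" by blast
      have g2: "good_goal Sig0 Cs0 (fst (A k, Ns k))" "good_goal Sig0 Cs0 (snd (A k, Ns k))"
        "length (fst (A k, Ns k)) \<le> length G" "length (snd (A k, Ns k)) \<le> L"
        using gk[of k] L[of k] by simp_all
      show "z \<in> good_st Sig0 Cs0 (length G) L (vv0 ` {..< Max (snd ` Sig0) * (length G + L)})"
        unfolding z c_def by (rule canon_in_good_st[OF inj_vv0 finite_Sig0 g2])
    qed
    then have "finite (range c)" using finite_good_st[OF finite_Sig0 finite_Cs0] finite_subset by blast
    then have "\<not> inj c" using finite_imageD by auto
    then obtain i j where ij: "i \<noteq> j" "c i = c j" by (auto simp: inj_def)
    have "\<exists>i j. i < j \<and> c i = c j"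
    proof (cases "i < j")
      case True then show ?thesis using ij by blast
    next
      case False then have "j < i" using ij(1) by simp
      then show ?thesis using ij(2) by (intro exI[of _ j] exI[of _ i]) simp
    qed
    then obtain i j where ij: "i < j" "c i = c j" by blast
    have v1: "variant (A i, Ns i) (c i)" unfolding c_def using canon_ex[OF inj_vv0] by blast
    have "variant (A j, Ns j) (c j)" unfolding c_def using canon_ex[OF inj_vv0] by blast
    then have v2: "variant (c j) (A j, Ns j)" by (rule variant_sym)
    have "variant (A i, Ns i) (A j, Ns j)" using variant_trans[OF v1] v2 ij(2) by simp
    then obtain f where f: "bij f" "(A j, Ns j) = rnst f (A i, Ns i)" by (auto simp: variant_def)
    have "is_renaming (ren f)" using f(1) by (auto simp: is_renaming_ren)
    moreover have "subst_goal (comp_upto \<theta>s j) G = subst_goal (ren f) (subst_goal (comp_upto \<theta>s i) G)"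
      "Ns j = subst_goal (ren f) (Ns i)" using f(2) by (simp_all add: rnst_def A_def)
    ultimately have "evr_pruned G \<theta>s Ns" using ij(1) unfolding evr_pruned_def by blast
    then show False using np by blast
  next
    case False
    have inf: "infinite {x. Estep\<^sup>*\<^sup>* root0 x}"
    proof
      assume fin: "finite {x. Estep\<^sup>*\<^sup>* root0 x}"
      define L where "L = Max ((\<lambda>x. length (snd x)) ` {x. Estep\<^sup>*\<^sup>* root0 x})"
      obtain k where k: "length (Ns k) > L" using False by (auto simp: not_le)
      define x where "x = canon vv0 (A k, M k)"
      have xr: "x \<in> {x. Estep\<^sup>*\<^sup>* root0 x}" unfolding x_def using M by blast
      have "variant (A k, M k) x" unfolding x_def using canon_ex[OF inj_vv0] by blast
      then have "length (snd x) = length (M k)" using variant_length by fastforce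
      moreover have "length (Ns k) \<le> length (M k)" using list_emb_length M by blast
      moreover have "length (snd x) \<le> L" unfolding L_def using fin xr by (intro Max_ge) auto
      ultimately show False using k by simp
    qed
    have fb: "\<And>x. Estep\<^sup>*\<^sup>* root0 x \<Longrightarrow> finite {y. Estep x y}" by (rule fin_branch)
    obtain y where y: "y 0 = root0" "\<forall>k. Estep (y k) (y (Suc k))" "inj y"
      using konig[of Estep root0, OF fb inf] by blast
    obtain Gs' cs' \<xi>s' \<theta>s' where "inf_sld_deriv P G Gs' cs' \<xi>s' \<theta>s'" "\<not> evr_pruned G \<theta>s' Gs'"
      using realize[OF y] by blast
    then show False using hyp by blast
  qed
qed

end

theorem theoremt1p2p1:
  fixes P :: "('p, 'f, 'v) clause set" and G :: "('p, 'f, 'v) goal"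
  assumes "infinite (UNIV :: 'v set)"
    and "finite P" and "ff_program P" and "ff_goal G"
    and "\<forall>Gs cs \<xi>s \<theta>s. inf_sld_deriv P G Gs cs \<xi>s \<theta>s \<longrightarrow> evr_pruned G \<theta>s Gs"
  shows "\<forall>Gs Ns \<alpha>s cs \<xi>s \<theta>s. inf_rsld_deriv P G Gs Ns \<alpha>s cs \<xi>s \<theta>s \<longrightarrow> evr_pruned G \<theta>s Ns"
  using main[OF assms(1) assms(2) assms(3) assms(4) assms(5)] by blast

end
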